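(* Let $L_t,M_t:(-\epsilon,\epsilon)\to SU(3)$ be smooth paths, and let $L'_0=L_0^{-1}\frac{dL_t}{dt}\big|_{t=0}$. Assume $$L_0=\begin{pmatrix}\lambda&0&0\\0&\lambda&0\\0&0&\lambda^{-2}\end{pmatrix},\qquad L'_0=\begin{pmatrix}i\alpha&0&0\\0&-i\alpha&0\\0&0&0\end{pmatrix},$$ where $\lambda$ is a complex number of modulus one and of infinite multiplicative order, and $\alpha\neq0$ is real. If $\frac{d}{dt}\mathrm{tr}(W_t)\big|_{t=0}=0$ for every word $W_t$ in $L_t$ and $M_t$, then $M_0\in G_\eta$ for some $\eta\in[0,2\pi)$.
   Context: A word in $L_t,M_t$ is a finite product of the matrices $L_t^{\pm1},M_t^{\pm1}$. For $\eta\in[0,2\pi)$, $G_\eta$ is the subgroup of $SU(3)$ consisting of matrices of the form $\begin{pmatrix}a&be^{-i\eta}&c\\ be^{i\eta}&a&ce^{i\eta}\\ c'&c'e^{-i\eta}&d\end{pmatrix}$ with $a,b,c,c',d\in\mathbb{C}$. *)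

theory Defs
  imports "HOL-Analysis.Analysis"
begin

type_synonym cmat3 = "complex^3^3"

definition mat3 :: "complex \<Rightarrow> complex \<Rightarrow> complex \<Rightarrow> complex \<Rightarrow> complex \<Rightarrow> complex
    \<Rightarrow> complex \<Rightarrow> complex \<Rightarrow> complex \<Rightarrow> cmat3" where
  "mat3 a11 a12 a13 a21 a22 a23 a31 a32 a33 =
     vector [vector [a11, a12, a13], vector [a21, a22, a23], vector [a31, a32, a33]]"

definition adj3 :: "cmat3 \<Rightarrow> cmat3" where
  "adj3 A = (\<chi> i j. cnj (A $ j $ i))"

definition SU3 :: "cmat3 set" where
  "SU3 = {A. A ** adj3 A = mat 1 \<and> det A = 1}"

definition G_eta :: "real \<Rightarrow> cmat3 set" where
  "G_eta eta = {A \<in> SU3. \<exists>a b c c' d.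
      A = mat3 a (b * cis (-eta)) c
               (b * cis eta) a (c * cis eta)
               c' (c' * cis (-eta)) d}"

definition smooth_on :: "real set \<Rightarrow> (real \<Rightarrow> 'a::real_normed_vector) \<Rightarrow> bool" where
  "smooth_on S f \<longleftrightarrow> (\<exists>D. D 0 = f \<and>
      (\<forall>k. \<forall>t\<in>S. (D k has_vector_derivative D (Suc k) t) (at t within S)))"

datatype letter = Lp | Li | Mp | Mi

fun letter_val :: "(real \<Rightarrow> cmat3) \<Rightarrow> (real \<Rightarrow> cmat3) \<Rightarrow> letter \<Rightarrow> real \<Rightarrow> cmat3" where
  "letter_val L M Lp t = L t"
| "letter_val L M Li t = matrix_inv (L t)"
| "letter_val L M Mp t = M t"
| "letter_val L M Mi t = matrix_inv (M t)"

fun word_val :: "(real \<Rightarrow> cmat3) \<Rightarrow> (real \<Rightarrow> cmat3) \<Rightarrow> letter list \<Rightarrow> real \<Rightarrow> cmat3" where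
  "word_val L M [] t = mat 1"
| "word_val L M (x # xs) t = letter_val L M x t ** word_val L M xs t"

end

theory Submission
  imports Defs
begin

lemma mat3_nth:
  "mat3 a11 a12 a13 a21 a22 a23 a31 a32 a33 $ 1 $ 1 = a11"
  "mat3 a11 a12 a13 a21 a22 a23 a31 a32 a33 $ 1 $ 2 = a12"
  "mat3 a11 a12 a13 a21 a22 a23 a31 a32 a33 $ 1 $ 3 = a13"
  "mat3 a11 a12 a13 a21 a22 a23 a31 a32 a33 $ 2 $ 1 = a21"
  "mat3 a11 a12 a13 a21 a22 a23 a31 a32 a33 $ 2 $ 2 = a22"
  "mat3 a11 a12 a13 a21 a22 a23 a31 a32 a33 $ 2 $ 3 = a23"
  "mat3 a11 a12 a13 a21 a22 a23 a31 a32 a33 $ 3 $ 1 = a31"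
  "mat3 a11 a12 a13 a21 a22 a23 a31 a32 a33 $ 3 $ 2 = a32"
  "mat3 a11 a12 a13 a21 a22 a23 a31 a32 a33 $ 3 $ 3 = a33"
  by (simp_all add: mat3_def)

lemma mat3_eq_iff: "(A::cmat3) = mat3 a11 a12 a13 a21 a22 a23 a31 a32 a33 \<longleftrightarrow>
  A$1$1 = a11 \<and> A$1$2 = a12 \<and> A$1$3 = a13 \<and> A$2$1 = a21 \<and> A$2$2 = a22 \<and> A$2$3 = a23 \<and>
  A$3$1 = a31 \<and> A$3$2 = a32 \<and> A$3$3 = a33"
  by (auto simp: vec_eq_iff forall_3 mat3_nth)

lemma mat3_eta: "(A::cmat3) = mat3 (A$1$1) (A$1$2) (A$1$3) (A$2$1) (A$2$2) (A$2$3) (A$3$1) (A$3$2) (A$3$3)"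
  by (simp add: mat3_eq_iff)

lemma mat3_mult: "mat3 a11 a12 a13 a21 a22 a23 a31 a32 a33 ** mat3 b11 b12 b13 b21 b22 b23 b31 b32 b33
  = mat3 (a11*b11+a12*b21+a13*b31) (a11*b12+a12*b22+a13*b32) (a11*b13+a12*b23+a13*b33)
         (a21*b11+a22*b21+a23*b31) (a21*b12+a22*b22+a23*b32) (a21*b13+a22*b23+a23*b33)
         (a31*b11+a32*b21+a33*b31) (a31*b12+a32*b22+a33*b32) (a31*b13+a32*b23+a33*b33)"
  by (simp add: mat3_eq_iff matrix_matrix_mult_def sum_3 mat3_nth)

lemma mat3_trace: "trace (mat3 a11 a12 a13 a21 a22 a23 a31 a32 a33) = a11 + a22 + a33"
  by (simp add: trace_def sum_3 mat3_nth)

lemma mat3_adj: "adj3 (mat3 a11 a12 a13 a21 a22 a23 a31 a32 a33) = mat3 (cnj a11) (cnj a21) (cnj a31) (cnj a12) (cnj a22) (cnj a32) (cnj a13) (cnj a23) (cnj a33)"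
  by (simp add: mat3_eq_iff adj3_def mat3_nth)

lemma mat3_one: "(mat 1 :: cmat3) = mat3 1 0 0 0 1 0 0 0 1"
  by (simp add: mat3_eq_iff mat_def)

lemma mat3_zero: "(0 :: cmat3) = mat3 0 0 0 0 0 0 0 0 0"
  by (simp add: mat3_eq_iff)

lemma mat3_add: "mat3 a11 a12 a13 a21 a22 a23 a31 a32 a33 + mat3 b11 b12 b13 b21 b22 b23 b31 b32 b33
  = mat3 (a11+b11) (a12+b12) (a13+b13) (a21+b21) (a22+b22) (a23+b23) (a31+b31) (a32+b32) (a33+b33)"
  by (simp add: mat3_eq_iff mat3_nth)

lemma mat3_scaleR: "c *\<^sub>R mat3 a11 a12 a13 a21 a22 a23 a31 a32 a33
  = mat3 (c*\<^sub>R a11) (c*\<^sub>Ra12) (c*\<^sub>Ra13) (c*\<^sub>Ra21) (c*\<^sub>Ra22) (c*\<^sub>Ra23) (c*\<^sub>Ra31) (c*\<^sub>Ra32) (c*\<^sub>Ra33)"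
  by (simp add: mat3_eq_iff mat3_nth)

lemma mult_scaleR_left: "((c::real) *\<^sub>R (A::cmat3)) ** (B::cmat3) = c *\<^sub>R (A ** B)"
  by (simp add: vec_eq_iff matrix_matrix_mult_def scaleR_sum_right)

lemma mult_scaleR_right: "(A::cmat3) ** ((c::real) *\<^sub>R (B::cmat3)) = c *\<^sub>R (A ** B)"
  by (simp add: vec_eq_iff matrix_matrix_mult_def scaleR_sum_right)

lemma trace_scaleR: "trace ((c::real) *\<^sub>R (A::cmat3)) = c *\<^sub>R trace A"
  by (simp add: trace_def scaleR_sum_right)

lemma adj3_mult: "adj3 ((A::cmat3) ** (B::cmat3)) = adj3 B ** adj3 A"
  by (subst (1 2) mat3_eta[of A], subst (1 2) mat3_eta[of B]) (simp add: mat3_mult mat3_adj algebra_simps)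

lemma matrix_add_rdistrib': "((B::cmat3) + C) ** A = B ** A + C ** A"
  by (simp add: vec_eq_iff matrix_matrix_mult_def sum.distrib algebra_simps)

lemma bilin_mult: "bounded_bilinear (\<lambda>(A::cmat3) (B::cmat3). A ** B)"
proof -
  have "bilinear (\<lambda>(A::cmat3) (B::cmat3). A ** B)"
    unfolding bilinear_def
    by (auto intro!: linearI simp: matrix_add_ldistrib matrix_add_rdistrib' mult_scaleR_left mult_scaleR_right)
  then show ?thesis by (simp add: bilinear_conv_bounded_bilinear)
qed

lemma lin_adj3: "bounded_linear adj3"
proof -
  have "linear adj3"
    by (auto intro!: linearI simp: adj3_def vec_eq_iff)
  then show ?thesis by (simp add: linear_conv_bounded_linear)
qed

lemma lin_trace: "bounded_linear (trace :: cmat3 \<Rightarrow> complex)"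
proof -
  have "linear (trace :: cmat3 \<Rightarrow> complex)"
    by (auto intro!: linearI simp: trace_def sum.distrib scaleR_sum_right)
  then show ?thesis by (simp add: linear_conv_bounded_linear)
qed

lemma inv_unique: "(A::cmat3) ** (B::cmat3) = mat 1 \<Longrightarrow> matrix_inv A = B"
proof -
  assume h: "A ** B = mat 1"
  hence h2: "B ** A = mat 1" using matrix_left_right_inverse by blast
  have ex: "A ** matrix_inv A = mat 1 \<and> matrix_inv A ** A = mat 1"
    unfolding matrix_inv_def by (rule someI[of _ B]) (use h h2 in auto)
  have "matrix_inv A = matrix_inv A ** (A ** B)" using h by simp
  also have "\<dots> = B" using ex by (simp add: matrix_mul_assoc)
  finally show ?thesis .
qed

lemma arch_zero: fixes c K :: real assumes "c \<ge> 0" "\<forall>n::nat. n \<ge> 1 \<longrightarrow> real n * c \<le> K" shows "c = 0"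
proof (rule ccontr)
  assume "c \<noteq> 0" hence cp: "c > 0" using assms(1) by simp
  obtain n::nat where n: "max K 0 < real n * c" using reals_Archimedean3[OF cp] by blast
  have "n \<ge> 1" using n cp by (cases n) auto
  with assms(2) n show False by auto
qed

lemma seq_p_zero:
  fixes z a p q a' p' q' :: complex
  assumes z1: "cmod z = 1" and zn1: "z \<noteq> 1" and zz: "z^2 \<noteq> 1"
  and h: "\<forall>n. of_nat n * (a + p*z^n + q*inverse z^n) + (a' + p'*z^n + q'*inverse z^n) = 0"
  shows "p = 0"
proof -
  define g where "g n = a + p*z^n + q*inverse z^n" for n
  define K where "K = cmod a' + cmod p' + cmod q'"
  have z0: "z \<noteq> 0" using z1 by auto
  have gb: "real n * cmod (g n) \<le> K" for n
  proof -
    have "of_nat n * g n = - (a' + p'*z^n + q'*inverse z^n)" using h[rule_format, of n] unfolding g_def by (simp add: add_eq_0_iff2 eq_neg_iff_add_eq_0)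
    hence "real n * cmod (g n) = cmod (a' + p'*z^n + q'*inverse z^n)"
      by (metis norm_minus_cancel norm_mult norm_of_nat)
    also have "\<dots> \<le> cmod a' + cmod (p'*z^n) + cmod (q'*inverse z^n)"
      by (meson norm_triangle_ineq order_trans add_mono order_refl)
    also have "\<dots> = K" by (simp add: K_def norm_mult norm_power z1 norm_inverse)
    finally show ?thesis .
  qed
  have K0: "K \<ge> 0" unfolding K_def by simp
  define C where "C = cmod p * cmod (z-1) * cmod (z - inverse z)"
  have T: "g (n+2) - (1 + inverse z) * g (n+1) + inverse z * g n = p * z^n * ((z-1)*(z - inverse z))" for n
    using z0 by (simp add: g_def field_simps power_add)
  have "C = 0"
  proof (rule arch_zero)
    show "C \<ge> 0" by (simp add: C_def)
    show "\<forall>n::nat. n \<ge> 1 \<longrightarrow> real n * C \<le> 4 * K"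
    proof (intro allI impI)
      fix n :: nat assume "n \<ge> 1"
      have nc: "cmod (1 + inverse z) \<le> 2"
        using norm_triangle_ineq[of 1 "inverse z"] z1 by (simp add: norm_inverse)
      have "C = cmod (g (n+2) - (1 + inverse z) * g (n+1) + inverse z * g n)"
        unfolding T[of n] C_def by (simp add: norm_mult norm_power z1)
      also have "\<dots> \<le> cmod (g (n+2)) + cmod ((1 + inverse z) * g (n+1)) + cmod (inverse z * g n)"
        by (meson norm_triangle_ineq norm_triangle_ineq4 order_trans add_mono order_refl)
      also have "\<dots> \<le> cmod (g (n+2)) + 2 * cmod (g (n+1)) + cmod (g n)"
        using nc by (simp add: norm_mult norm_inverse z1 mult_right_mono)
      finally have Cb: "C \<le> cmod (g (n+2)) + 2 * cmod (g (n+1)) + cmod (g n)" .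
      have "real n * C \<le> real n * (cmod (g (n+2)) + 2 * cmod (g (n+1)) + cmod (g n))"
        by (rule mult_left_mono[OF Cb]) simp
      hence "real n * C \<le> real n * cmod (g (n+2)) + 2 * (real n * cmod (g (n+1))) + real n * cmod (g n)"
        by (simp add: algebra_simps)
      also have "\<dots> \<le> K + 2 * K + K"
      proof -
        have "real n * cmod (g (n+2)) \<le> real (n+2) * cmod (g (n+2))" by (simp add: mult_right_mono)
        moreover have "real n * cmod (g (n+1)) \<le> real (n+1) * cmod (g (n+1))" by (simp add: mult_right_mono)
        ultimately show ?thesis using gb[of n] gb[of "n+1"] gb[of "n+2"] by linarith
      qed
      finally show "real n * C \<le> 4 * K" by simp
    qed
  qed
  moreover have "z - 1 \<noteq> 0" using zn1 by simp
  moreover have "z - inverse z \<noteq> 0"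
  proof
    assume "z - inverse z = 0"
    hence "z * z = 1" using z0 by (simp add: field_simps)
    thus False using zz by (simp add: power2_eq_square)
  qed
  ultimately show "p = 0" by (simp add: C_def)
qed

lemma seq_zero:
  fixes z a p q a' p' q' :: complex
  assumes z1: "cmod z = 1" and zn1: "z \<noteq> 1" and zz: "z^2 \<noteq> 1"
  and h: "\<forall>n. of_nat n * (a + p*z^n + q*inverse z^n) + (a' + p'*z^n + q'*inverse z^n) = 0"
  shows "a = 0 \<and> p = 0 \<and> q = 0"
proof -
  have p0: "p = 0" by (rule seq_p_zero[OF z1 zn1 zz h])
  have z0: "z \<noteq> 0" using z1 by auto
  have h': "\<forall>n. of_nat n * (a + q*(inverse z)^n + p*inverse (inverse z)^n) + (a' + q'*(inverse z)^n + p'*inverse (inverse z)^n) = 0"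
    using h by (simp add: power_inverse algebra_simps)
  have q0: "q = 0"
    by (rule seq_p_zero[OF _ _ _ h']) (use z1 zn1 zz z0 in \<open>auto simp: norm_inverse power_inverse field_simps norm_divide\<close>)
  have "cmod a = 0"
  proof (rule arch_zero)
    show "\<forall>n::nat. n \<ge> 1 \<longrightarrow> real n * cmod a \<le> cmod a' + cmod p' + cmod q'"
    proof (intro allI impI)
      fix n :: nat
      have "of_nat n * a = - (a' + p'*z^n + q'*inverse z^n)" using h[rule_format, of n] p0 q0 by (simp add: add_eq_0_iff2 eq_neg_iff_add_eq_0)
      hence "real n * cmod a = cmod (a' + p'*z^n + q'*inverse z^n)"
        by (metis norm_minus_cancel norm_mult norm_of_nat)
      also have "\<dots> \<le> cmod a' + cmod (p'*z^n) + cmod (q'*inverse z^n)"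
        by (meson norm_triangle_ineq order_trans add_mono order_refl)
      also have "\<dots> = cmod a' + cmod p' + cmod q'" by (simp add: norm_mult norm_power z1 norm_inverse)
      finally show "real n * cmod a \<le> cmod a' + cmod p' + cmod q'" .
    qed
  qed simp
  thus ?thesis using p0 q0 by simp
qed

lemma unit_cis: assumes "cmod w = 1" shows "\<exists>th\<in>{0..<2*pi}. w = cis th"
proof -
  have w: "w = cis (Arg w)" using rcis_cmod_Arg[of w] assms by (simp add: rcis_def)
  have b: "- pi < Arg w" "Arg w \<le> pi" using Arg_bounded by auto
  show ?thesis
  proof (cases "Arg w \<ge> 0")
    case True thus ?thesis using w b by (intro bexI[of _ "Arg w"]) auto
  next
    case False
    have "cis (Arg w + 2*pi) = cis (Arg w)" by (simp add: cis_mult[symmetric])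
    thus ?thesis using w b False by (intro bexI[of _ "Arg w + 2*pi"]) auto
  qed
qed

lemma cnj_sq: "z * cnj z = complex_of_real ((cmod z)^2)"
  by (simp add: complex_norm_square[symmetric])

lemma final_alg:
  fixes m11 m12 m13 m21 m22 m23 m31 m32 m33 :: complex
  assumes u1: "m31 * cnj m31 + m32 * cnj m32 + m33 * cnj m33 = 1"
  and u2: "m13 * cnj m13 + m23 * cnj m23 + m33 * cnj m33 = 1"
  and e1: "m11 = m22"
  and e2: "m12 * cnj m12 = m21 * cnj m21"
  and e3: "m13 * cnj m13 = m23 * cnj m23"
  and e4: "m31 * cnj m31 = m32 * cnj m32"
  and e5: "m13 * m31 = m23 * m32"
  and e6: "m12*(m21*m11+m22*m21+m23*m31) = m21*(m11*m12+m12*m22+m13*m32)"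
  shows "\<exists>eta\<in>{0..<2*pi}. \<exists>a b c c' d. mat3 m11 m12 m13 m21 m22 m23 m31 m32 m33 =
      mat3 a (b * cis (-eta)) c (b * cis eta) a (c * cis eta) c' (c' * cis (-eta)) d"
proof -
  have n2: "(cmod m12)^2 = (cmod m21)^2" "(cmod m13)^2 = (cmod m23)^2" "(cmod m31)^2 = (cmod m32)^2"
    using e2 e3 e4 unfolding cnj_sq of_real_eq_iff by auto
  have n1: "(cmod m31)^2 + (cmod m32)^2 + (cmod m33)^2 = 1"
    using u1 unfolding cnj_sq by (metis of_real_add of_real_eq_1_iff)
  have n1': "(cmod m13)^2 + (cmod m23)^2 + (cmod m33)^2 = 1"
    using u2 unfolding cnj_sq by (metis of_real_add of_real_eq_1_iff)
  have n13: "cmod m13 = cmod m31" using n1 n1' n2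
    by (smt (verit) norm_ge_zero power2_eq_imp_eq)
  have a21: "cmod m21 = cmod m12" "cmod m23 = cmod m13" "cmod m32 = cmod m31" using n2
    by (auto intro: power2_eq_imp_eq)
  show ?thesis
  proof (cases "m13 = 0")
    case True
    hence z: "m13 = 0" "m23 = 0" "m31 = 0" "m32 = 0" using a21 n13 by auto
    show ?thesis
    proof (cases "m12 = 0")
      case True
      hence "m21 = 0" using a21 by auto
      thus ?thesis using z True e1
        by (intro bexI[of _ 0] exI[of _ m11] exI[of _ 0] exI[of _ 0] exI[of _ 0] exI[of _ m33]) auto
    next
      case False
      have "cmod (m21 / m12) = 1" using False a21 by (simp add: norm_divide)
      then obtain th where th: "th \<in> {0..<2*pi}" "m21 / m12 = cis th" using unit_cis by blast
      have c2: "cis (th/2) * cis (th/2) = cis th" by (simp add: cis_mult)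
      have "m12 * cis (th/2) * cis (th/2) = m21" using th(2) c2 False
        by (simp add: field_simps)
      moreover have "m12 * cis (th/2) * cis (-(th/2)) = m12"
        by (simp add: mult.assoc cis_mult)
      ultimately show ?thesis using z e1 th(1)
        by (intro bexI[of _ "th/2"] exI[of _ m11] exI[of _ "m12 * cis (th/2)"] exI[of _ 0] exI[of _ 0] exI[of _ m33]) (auto simp: mat3_eq_iff mat3_nth)
    qed
  next
    case False
    hence m31: "m31 \<noteq> 0" using n13 by auto
    have "cmod (m23 / m13) = 1" using False a21 by (simp add: norm_divide)
    then obtain th where th: "th \<in> {0..<2*pi}" "m23 / m13 = cis th" using unit_cis by blast
    have m23: "m23 = m13 * cis th" using th(2) False by (simp add: field_simps)
    have ci: "cis th * cis (-th) = 1" by (simp add: cis_mult)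
    have m32: "m32 = m31 * cis (-th)"
    proof -
      have "m13 * m31 = m13 * (cis th * m32)" using e5 m23 by (simp add: algebra_simps)
      hence "m31 = cis th * m32" using False by simp
      thus ?thesis using ci by (metis mult.assoc mult.commute mult_1_right)
    qed
    have "m12 * m23 * m31 = m21 * m13 * m32" using e6 e1 by (simp add: algebra_simps)
    hence "m13 * m31 * (m12 * cis th) = m13 * m31 * (m21 * cis (-th))"
      using m23 m32 by (simp add: algebra_simps)
    hence "m12 * cis th = m21 * cis (-th)" using False m31 by simp
    hence "m12 * cis th * cis th = m21 * (cis (-th) * cis th)" by (simp add: algebra_simps)
    hence m21: "m12 * cis th * cis th = m21" using ci by (simp add: mult.commute)
    have m12: "m12 * cis th * cis (-th) = m12" using ci by (simp add: mult.assoc)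
    show ?thesis using th(1) m21 m12 m23 m32 e1
      by (intro bexI[of _ th] exI[of _ m11] exI[of _ "m12 * cis th"] exI[of _ m13] exI[of _ m31] exI[of _ m33]) (auto simp: mat3_eq_iff mat3_nth)
  qed
qed

fun Dw :: "(letter \<Rightarrow> cmat3) \<Rightarrow> (real\<Rightarrow>cmat3) \<Rightarrow> (real\<Rightarrow>cmat3) \<Rightarrow> letter list \<Rightarrow> cmat3" where
  "Dw dl L M [] = 0"
| "Dw dl L M (x#xs) = dl x ** word_val L M xs 0 + letter_val L M x 0 ** Dw dl L M xs"

lemma word_val_append: "word_val L M (u @ w) t = word_val L M u t ** word_val L M w t"
  by (induction u) (auto simp: matrix_mul_assoc)

lemma Dw_append: "Dw dl L M (u @ w) = Dw dl L M u ** word_val L M w 0 + word_val L M u 0 ** Dw dl L M w"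
  by (induction u) (auto simp: word_val_append matrix_mul_assoc matrix_add_ldistrib matrix_add_rdistrib')

lemma deriv_word:
  assumes dl: "\<And>x. (letter_val L M x has_vector_derivative dl x) (at 0)"
  shows "(word_val L M w has_vector_derivative Dw dl L M w) (at 0)"
proof (induction w)
  case Nil
  have "word_val L M [] = (\<lambda>t. mat 1)" by auto
  then show ?case by (simp add: has_vector_derivative_const)
next
  case (Cons x xs)
  have e: "word_val L M (x#xs) = (\<lambda>t. letter_val L M x t ** word_val L M xs t)" by auto
  show ?case unfolding e
    using bounded_bilinear.has_vector_derivative[OF bilin_mult dl[of x] Cons.IH]
    by (simp add: add.commute)
qed

lemma comm_rep:
  assumes "letter_val L M x 0 ** X = X ** letter_val L M x 0"
  shows "word_val L M (replicate n x) 0 ** X = X ** word_val L M (replicate n x) 0"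
proof (induction n)
  case (Suc n)
  let ?A = "letter_val L M x 0" and ?P = "word_val L M (replicate n x) 0"
  have "?A ** ?P ** X = ?A ** (X ** ?P)" using Suc by (metis matrix_mul_assoc)
  also have "\<dots> = X ** ?A ** ?P" using assms by (metis matrix_mul_assoc)
  finally show ?case by (simp add: matrix_mul_assoc)
qed simp

lemma Dw_rep:
  assumes dlx: "dl x = letter_val L M x 0 ** X" and cm: "letter_val L M x 0 ** X = X ** letter_val L M x 0"
  shows "Dw dl L M (replicate n x @ w) = real n *\<^sub>R (word_val L M (replicate n x) 0 ** X ** word_val L M w 0)
     + word_val L M (replicate n x) 0 ** Dw dl L M w"
proof (induction n)
  case 0 then show ?case by simp
next
  case (Suc n)
  let ?A = "letter_val L M x 0" and ?P = "word_val L M (replicate n x) 0" and ?W = "word_val L M w 0"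
  have c: "?P ** X = X ** ?P" by (rule comm_rep[OF cm])
  have "Dw dl L M (replicate (Suc n) x @ w) = ?A ** X ** (?P ** ?W) + ?A ** (real n *\<^sub>R (?P ** X ** ?W) + ?P ** Dw dl L M w)"
    using Suc dlx by (simp add: word_val_append)
  also have "\<dots> = (?A ** ?P ** X ** ?W) + real n *\<^sub>R (?A ** ?P ** X ** ?W) + ?A ** ?P ** Dw dl L M w"
  proof -
    have "?A ** X ** (?P ** ?W) = ?A ** ?P ** X ** ?W"
      by (metis c matrix_mul_assoc)
    thus ?thesis by (simp add: matrix_add_ldistrib mult_scaleR_right matrix_mul_assoc)
  qed
  also have "\<dots> = real (Suc n) *\<^sub>R (?A ** ?P ** X ** ?W) + ?A ** ?P ** Dw dl L M w"
    by (simp add: scaleR_left_distrib algebra_simps)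
  finally show ?case by (simp add: matrix_mul_assoc)
qed

definition Pm :: "complex \<Rightarrow> nat \<Rightarrow> cmat3" where
  "Pm lam n = mat3 (lam^n) 0 0 0 (lam^n) 0 0 0 (inverse lam ^ (2*n))"
definition Qm :: "complex \<Rightarrow> nat \<Rightarrow> cmat3" where
  "Qm lam n = mat3 (inverse lam ^ n) 0 0 0 (inverse lam ^ n) 0 0 0 (lam ^ (2*n))"

definition c0 :: "cmat3 \<Rightarrow> cmat3 \<Rightarrow> complex" where
  "c0 Y Z = Y$1$1*Z$1$1 + Y$1$2*Z$2$1 + Y$2$1*Z$1$2 + Y$2$2*Z$2$2 + Y$3$3*Z$3$3"
definition cp :: "cmat3 \<Rightarrow> cmat3 \<Rightarrow> complex" where
  "cp Y Z = Y$1$3*Z$3$1 + Y$2$3*Z$3$2"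
definition cm :: "cmat3 \<Rightarrow> cmat3 \<Rightarrow> complex" where
  "cm Y Z = Y$3$1*Z$1$3 + Y$3$2*Z$2$3"

lemma conj_trace00:
  fixes a b y11 y12 y13 y21 y22 y23 y31 y32 y33 z11 z12 z13 z21 z22 z23 z31 z32 z33 :: complex
  assumes "a * b = 1"
  shows "a * y11 * b * z11 + a * y12 * b * z21 + a * y13 * a^2 * z31 +
     (a * y21 * b * z12 + a * y22 * b * z22 + a * y23 * a^2 * z32) +
     (b^2 * y31 * b * z13 + b^2 * y32 * b * z23 + b^2 * y33 * a^2 * z33) =
     y11 * z11 + y12 * z21 + y21 * z12 + y22 * z22 + y33 * z33 + a ^ 3 * (y13 * z31 + y23 * z32) +
     b ^ 3 * (y31 * z13 + y32 * z23)"
  using assms by algebra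

lemma conj_trace0:
  assumes "(a::complex) \<noteq> 0"
  shows "trace (mat3 a 0 0 0 a 0 0 0 (inverse a ^ 2) ** Y ** mat3 (inverse a) 0 0 0 (inverse a) 0 0 0 (a^2) ** Z)
     = c0 Y Z + a^3 * cp Y Z + inverse a ^ 3 * cm Y Z"
  apply (subst mat3_eta[of Y], subst mat3_eta[of Z])
  apply (simp only: mat3_mult mat3_trace c0_def cp_def cm_def mat3_nth mult_zero_left mult_zero_right add_0_left add_0_right)
  apply (rule conj_trace00)
  using assms apply simp
  done

lemma conj_trace:
  assumes "lam \<noteq> 0"
  shows "trace (Pm lam n ** Y ** Qm lam n ** Z) = c0 Y Z + (lam^3)^n * cp Y Z + inverse (lam^3)^n * cm Y Z"
proof -
  have "inverse lam ^ (2*n) = inverse (lam^n) ^ 2" "lam ^ (2*n) = (lam^n)^2"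
    by (simp_all add: power_inverse[symmetric] power_mult[symmetric] mult.commute[of 2])
  hence "Pm lam n = mat3 (lam^n) 0 0 0 (lam^n) 0 0 0 (inverse (lam^n) ^ 2)"
     "Qm lam n = mat3 (inverse (lam^n)) 0 0 0 (inverse (lam^n)) 0 0 0 ((lam^n)^2)"
    by (simp_all add: Pm_def Qm_def power_inverse)
  moreover have "(lam^3)^n = (lam^n)^3" "inverse (lam^3)^n = inverse (lam^n)^3"
    by (simp_all add: power_mult[symmetric] mult.commute power_inverse)
  ultimately show ?thesis using conj_trace0[of "lam^n" Y Z] assms by simp
qed

lemma P_trace:
  "trace (Pm lam n ** Y) = lam^n * (Y$1$1 + Y$2$2) + inverse lam ^ (2*n) * Y$3$3"
  apply (subst mat3_eta[of Y])
  apply (simp only: Pm_def mat3_mult mat3_trace mat3_nth mult_zero_left mult_zero_right add_0_left add_0_right)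
  apply (simp add: algebra_simps)
  done

lemma aux_uv: "(u::complex) * v = 1 \<Longrightarrow> u * w = t \<Longrightarrow> u * (k * (v * c) + v * d + w * e) = k * c + d + e * t"
  by algebra

theorem lemma6p6:
  fixes L M :: "real \<Rightarrow> complex^3^3" and eps alpha :: real and lam :: complex
  assumes epsP: "eps > 0"
    and smoothL: "smooth_on {-eps<..<eps} L" and smoothM: "smooth_on {-eps<..<eps} M"
    and SUL: "\<forall>t\<in>{-eps<..<eps}. L t \<in> SU3" and SUM: "\<forall>t\<in>{-eps<..<eps}. M t \<in> SU3"
    and lam_mod: "cmod lam = 1"
    and lam_ord: "\<forall>n::nat. n > 0 \<longrightarrow> lam ^ n \<noteq> 1"
    and alphaP: "alpha \<noteq> 0"
    and L0: "L 0 = mat3 lam 0 0  0 lam 0  0 0 (inverse (lam^2))"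
    and L'0: "matrix_inv (L 0) ** vector_derivative L (at 0)
              = mat3 (\<i> * of_real alpha) 0 0  0 (- \<i> * of_real alpha) 0  0 0 0"
    and words: "\<forall>w::letter list. ((\<lambda>t. trace (word_val L M w t)) has_vector_derivative 0) (at 0)"
  shows "\<exists>eta\<in>{0..<2*pi}. M 0 \<in> G_eta eta"
proof -
  define S where "S = {-eps<..<eps}"
  have S: "open S" "0 \<in> S" using epsP by (auto simp: S_def)
  obtain DL where DL: "DL 0 = L" "\<forall>k. \<forall>t\<in>S. (DL k has_vector_derivative DL (Suc k) t) (at t within S)"
    using smoothL unfolding smooth_on_def S_def by blast
  obtain DM where DM: "DM 0 = M" "\<forall>k. \<forall>t\<in>S. (DM k has_vector_derivative DM (Suc k) t) (at t within S)"
    using smoothM unfolding smooth_on_def S_def by blast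
  define dL where "dL = DL (Suc 0) 0"
  define dM where "dM = DM (Suc 0) 0"
  have dLd: "(L has_vector_derivative dL) (at 0)"
    using DL(2)[rule_format, of 0 0] DL(1) S has_vector_derivative_within_open unfolding dL_def by metis
  have dMd: "(M has_vector_derivative dM) (at 0)"
    using DM(2)[rule_format, of 0 0] DM(1) S has_vector_derivative_within_open unfolding dM_def by metis
  have vd: "vector_derivative L (at 0) = dL" by (rule vector_derivative_at[OF dLd])
  have lam0: "lam \<noteq> 0" using lam_mod by auto
  have cnjl: "cnj lam = inverse lam" using lam_mod
    by (metis complex_norm_square mult.commute of_real_1 power_one inverse_unique)
  define X where "X = mat3 (\<i> * of_real alpha) 0 0  0 (- \<i> * of_real alpha) 0  0 0 0"
  define Xm where "Xm = mat3 (- \<i> * of_real alpha) 0 0  0 (\<i> * of_real alpha) 0  0 0 0"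
  define L0m where "L0m = mat3 lam 0 0  0 lam 0  0 0 (inverse (lam^2))"
  define Li0 where "Li0 = mat3 (inverse lam) 0 0  0 (inverse lam) 0  0 0 (lam^2)"
  have LLi: "L0m ** Li0 = mat 1" using lam0 by (simp add: L0m_def Li0_def mat3_mult mat3_one)
  have invL0: "matrix_inv (L 0) = Li0" using L0 LLi inv_unique L0m_def by metis
  have dLe: "dL = L0m ** X"
  proof -
    have "Li0 ** dL = X" using L'0 invL0 vd X_def by simp
    hence "L0m ** X = (L0m ** Li0) ** dL" by (metis matrix_mul_assoc)
    thus ?thesis using LLi by simp
  qed
  have invt: "matrix_inv (A t) = adj3 (A t)" if "\<forall>t\<in>S. A t \<in> SU3" "t \<in> S" for A t
    using that by (intro inv_unique) (auto simp: SU3_def)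
  have dLi: "((\<lambda>t. matrix_inv (L t)) has_vector_derivative adj3 dL) (at 0)"
    by (rule has_vector_derivative_transform_within_open[OF bounded_linear.has_vector_derivative[OF lin_adj3 dLd] S])
       (use invt[of L] SUL S_def in auto)
  have dMi: "((\<lambda>t. matrix_inv (M t)) has_vector_derivative adj3 dM) (at 0)"
    by (rule has_vector_derivative_transform_within_open[OF bounded_linear.has_vector_derivative[OF lin_adj3 dMd] S])
       (use invt[of M] SUM S_def in auto)
  have adL: "adj3 dL = Li0 ** Xm"
    by (simp add: dLe L0m_def X_def Li0_def Xm_def mat3_mult mat3_adj cnjl)
  define dl where "dl = (\<lambda>x. case x of Lp \<Rightarrow> dL | Li \<Rightarrow> adj3 dL | Mp \<Rightarrow> dM | Mi \<Rightarrow> adj3 dM)"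
  have dlv: "(letter_val L M x has_vector_derivative dl x) (at 0)" for x
  proof (cases x)
    case Lp
    have "letter_val L M x = L" using Lp by (simp add: fun_eq_iff)
    thus ?thesis using dLd Lp by (simp add: dl_def)
  next
    case Li
    have "letter_val L M x = (\<lambda>t. matrix_inv (L t))" using Li by (simp add: fun_eq_iff)
    thus ?thesis using dLi Li by (simp add: dl_def)
  next
    case Mp
    have "letter_val L M x = M" using Mp by (simp add: fun_eq_iff)
    thus ?thesis using dMd Mp by (simp add: dl_def)
  next
    case Mi
    have "letter_val L M x = (\<lambda>t. matrix_inv (M t))" using Mi by (simp add: fun_eq_iff)
    thus ?thesis using dMi Mi by (simp add: dl_def)
  qed
  have tr0: "trace (Dw dl L M w) = 0" for w
    using vector_derivative_unique_at[OF bounded_linear.has_vector_derivative[OF lin_trace deriv_word[OF dlv]] words[rule_format, of w]] .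
  have lv: "letter_val L M Lp 0 = L0m" "letter_val L M Li 0 = Li0" "letter_val L M Mp 0 = M 0"
     "letter_val L M Mi 0 = adj3 (M 0)"
    using L0 invL0 invt[of M 0] SUM S by (auto simp: L0m_def S_def)
  have Pn: "word_val L M (replicate n Lp) 0 = Pm lam n" for n
  proof (induction n)
    case 0 thus ?case by (simp add: Pm_def mat3_one)
  next
    case (Suc n)
    have "inverse (lam^2) * inverse lam ^ (2*n) = inverse lam * (inverse lam * inverse lam ^ (2*n))"
      by (simp add: power2_eq_square)
    show ?case using Suc lv by (simp add: Pm_def L0m_def mat3_mult power2_eq_square mult.assoc)
  qed
  have Qn: "word_val L M (replicate n Li) 0 = Qm lam n" for n
  proof (induction n)
    case 0 thus ?case by (simp add: Qm_def mat3_one)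
  next
    case (Suc n)
    show ?case using Suc lv by (simp add: Qm_def Li0_def mat3_mult power2_eq_square mult.assoc)
  qed
  have cL: "L0m ** X = X ** L0m" by (simp add: L0m_def X_def mat3_mult mult.commute)
  have cLi: "Li0 ** Xm = Xm ** Li0" by (simp add: Li0_def Xm_def mat3_mult mult.commute)
  have cQ: "Qm lam n ** Xm = Xm ** Qm lam n" for n
    using comm_rep[of L M Li Xm n] cLi lv Qn by simp
  have dlL: "dl Lp = letter_val L M Lp 0 ** X" using dLe lv by (simp add: dl_def)
  have dlLi: "dl Li = letter_val L M Li 0 ** Xm" using adL lv by (simp add: dl_def)
  define z where "z = lam^3"
  have z1: "cmod z = 1" using lam_mod by (simp add: z_def norm_power)
  have zn1: "z \<noteq> 1" using lam_ord[rule_format, of 3] by (simp add: z_def)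
  have zz: "z^2 \<noteq> 1" using lam_ord[rule_format, of 6] by (simp add: z_def power_mult[symmetric])
  define M0 where "M0 = M 0"
  have fam: "c0 (X ** M0) B0 + c0 (M0 ** Xm) B0 = 0 \<and> cp (X ** M0) B0 + cp (M0 ** Xm) B0 = 0
       \<and> cm (X ** M0) B0 + cm (M0 ** Xm) B0 = 0" if B0: "B0 = word_val L M B 0" for B B0
  proof -
    define dB where "dB = Dw dl L M B"
    have "\<forall>n. of_nat n * ((c0 (X ** M0) B0 + c0 (M0 ** Xm) B0) + (cp (X ** M0) B0 + cp (M0 ** Xm) B0) * z^n
          + (cm (X ** M0) B0 + cm (M0 ** Xm) B0) * inverse z ^ n)
         + ((c0 dM B0 + c0 M0 dB) + (cp dM B0 + cp M0 dB) * z^n + (cm dM B0 + cm M0 dB) * inverse z ^ n) = 0"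
    proof
      fix n
      let ?P = "Pm lam n" and ?Q = "Qm lam n"
      have D1: "Dw dl L M (replicate n Lp @ (Mp # (replicate n Li @ B)))
        = real n *\<^sub>R (?P ** X ** (M0 ** (?Q ** B0))) + ?P ** Dw dl L M (Mp # (replicate n Li @ B))"
        using Dw_rep[of dl Lp L M X n "Mp # (replicate n Li @ B)", OF dlL cL[folded lv(1)]] Pn Qn B0 M0_def lv
        by (simp add: word_val_append)
      have D2: "Dw dl L M (Mp # (replicate n Li @ B)) = dM ** (?Q ** B0) + M0 ** (real n *\<^sub>R (?Q ** Xm ** B0) + ?Q ** dB)"
        using Dw_rep[of dl Li L M Xm n B, OF dlLi cLi[folded lv(2)]] Qn B0 M0_def lv dB_def
        by (simp add: word_val_append dl_def)
      have "0 = trace (Dw dl L M (replicate n Lp @ (Mp # (replicate n Li @ B))))" using tr0 by simp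
      also have "\<dots> = of_nat n * (trace (?P ** (X ** M0) ** ?Q ** B0) + trace (?P ** (M0 ** Xm) ** ?Q ** B0))
          + trace (?P ** dM ** ?Q ** B0) + trace (?P ** M0 ** ?Q ** dB)"
      proof -
        have a1: "?P ** X ** (M0 ** (?Q ** B0)) = ?P ** (X ** M0) ** ?Q ** B0" by (simp add: matrix_mul_assoc)
        have a2: "?P ** (M0 ** (?Q ** Xm ** B0)) = ?P ** (M0 ** Xm) ** ?Q ** B0"
          using cQ[of n] by (simp add: matrix_mul_assoc)
        have a3: "?P ** (dM ** (?Q ** B0)) = ?P ** dM ** ?Q ** B0" "?P ** (M0 ** (?Q ** dB)) = ?P ** M0 ** ?Q ** dB"
          by (simp_all add: matrix_mul_assoc)
        show ?thesis unfolding D1 D2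
          apply (simp add: matrix_add_ldistrib mult_scaleR_right trace_add trace_scaleR a1 a2 a3)
          apply (simp add: scaleR_conv_of_real algebra_simps)
          done
      qed
      finally show "of_nat n * ((c0 (X ** M0) B0 + c0 (M0 ** Xm) B0) + (cp (X ** M0) B0 + cp (M0 ** Xm) B0) * z^n
          + (cm (X ** M0) B0 + cm (M0 ** Xm) B0) * inverse z ^ n)
         + ((c0 dM B0 + c0 M0 dB) + (cp dM B0 + cp M0 dB) * z^n + (cm dM B0 + cm M0 dB) * inverse z ^ n) = 0"
        unfolding conj_trace[OF lam0] z_def by (simp add: algebra_simps)
    qed
    from seq_zero[OF z1 zn1 zz this] show ?thesis by simp
  qed
  define m11 where "m11 = M0$1$1"
  define m12 where "m12 = M0$1$2"
  define m13 where "m13 = M0$1$3"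
  define m21 where "m21 = M0$2$1"
  define m22 where "m22 = M0$2$2"
  define m23 where "m23 = M0$2$3"
  define m31 where "m31 = M0$3$1"
  define m32 where "m32 = M0$3$2"
  define m33 where "m33 = M0$3$3"
  have M0e: "M0 = mat3 m11 m12 m13 m21 m22 m23 m31 m32 m33"
    unfolding m11_def m12_def m13_def m21_def m22_def m23_def m31_def m32_def m33_def by (rule mat3_eta)
  have ia: "\<i> * complex_of_real alpha \<noteq> 0" using alphaP by simp
  have W1: "word_val L M [Mp] 0 = M0" "word_val L M [Mi] 0 = adj3 M0" "word_val L M [Mp, Mp] 0 = M0 ** M0"
    using lv by (simp_all add: M0_def)
  note f1 = fam[OF W1(1)[symmetric]] and f2 = fam[OF W1(2)[symmetric]] and f3 = fam[OF W1(3)[symmetric]]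
  have e1: "m11 = m22"
  proof -
    have "\<forall>n. of_nat n * (\<i> * complex_of_real alpha * (m11 - m22) + 0 * z^n + 0 * inverse z ^ n)
       + ((dM$1$1 + dM$2$2) + 0 * z^n + dM$3$3 * inverse z ^ n) = 0"
    proof
      fix n
      have D: "Dw dl L M (replicate n Lp @ [Mp]) = real n *\<^sub>R (Pm lam n ** (X ** M0)) + Pm lam n ** dM"
        using Dw_rep[of dl Lp L M X n "[Mp]", OF dlL cL[folded lv(1)]] Pn lv M0_def
        by (simp add: dl_def matrix_mul_assoc)
      have "0 = inverse lam ^ n * trace (Dw dl L M (replicate n Lp @ [Mp]))" using tr0 by simp
      also have "\<dots> = inverse lam ^ n * (of_nat n * (lam^n * (\<i> * complex_of_real alpha * (m11 - m22))) +
          lam^n * (dM$1$1 + dM$2$2) + inverse lam ^ (2*n) * dM$3$3)"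
        unfolding D trace_add trace_scaleR P_trace
        by (simp add: scaleR_conv_of_real M0e X_def mat3_mult mat3_nth algebra_simps)
      also have "\<dots> = of_nat n * (\<i> * complex_of_real alpha * (m11 - m22)) + (dM$1$1 + dM$2$2) + dM$3$3 * inverse z ^ n"
      proof -
        have "inverse lam ^ n * lam ^ n = 1" using lam0 by (metis power_mult_distrib left_inverse power_one)
        moreover have "inverse lam ^ n * inverse lam ^ (2*n) = inverse z ^ n"
        proof -
          have "inverse lam ^ n * inverse lam ^ (2*n) = inverse lam ^ (3*n)" by (simp add: power_add[symmetric])
          thus ?thesis by (simp add: z_def power_mult power_inverse)
        qed
        ultimately show ?thesis by (rule aux_uv)
      qed
      finally show "of_nat n * (\<i> * complex_of_real alpha * (m11 - m22) + 0 * z^n + 0 * inverse z ^ n)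
       + ((dM$1$1 + dM$2$2) + 0 * z^n + dM$3$3 * inverse z ^ n) = 0" by (simp add: add.assoc)
    qed
    from seq_zero[OF z1 zn1 zz this] ia show ?thesis by simp
  qed
  define k where "k = \<i> * complex_of_real alpha"
  have k0: "k \<noteq> 0" using ia k_def by simp
  have "c0 (X ** M0) (adj3 M0) + c0 (M0 ** Xm) (adj3 M0) = 2 * k * (m12 * cnj m12 - m21 * cnj m21)"
    by (simp add: M0e X_def Xm_def k_def mat3_mult mat3_adj c0_def mat3_nth algebra_simps)
  hence e2: "m12 * cnj m12 = m21 * cnj m21" using f2 k0 by simp
  have "cp (X ** M0) (adj3 M0) + cp (M0 ** Xm) (adj3 M0) = k * (m13 * cnj m13 - m23 * cnj m23)"
    by (simp add: M0e X_def Xm_def k_def mat3_mult mat3_adj cp_def mat3_nth algebra_simps)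
  hence e3: "m13 * cnj m13 = m23 * cnj m23" using f2 k0 by simp
  have "cm (X ** M0) (adj3 M0) + cm (M0 ** Xm) (adj3 M0) = k * (m32 * cnj m32 - m31 * cnj m31)"
    by (simp add: M0e X_def Xm_def k_def mat3_mult mat3_adj cm_def mat3_nth algebra_simps)
  hence e4: "m31 * cnj m31 = m32 * cnj m32" using f2 k0 by simp
  have "cp (X ** M0) M0 + cp (M0 ** Xm) M0 = k * (m13 * m31 - m23 * m32)"
    by (simp add: M0e X_def Xm_def k_def mat3_mult cp_def mat3_nth algebra_simps)
  hence e5: "m13 * m31 = m23 * m32" using f1 k0 by simp
  have "c0 (X ** M0) (M0 ** M0) + c0 (M0 ** Xm) (M0 ** M0) =
     2 * k * (m12*(m21*m11+m22*m21+m23*m31) - m21*(m11*m12+m12*m22+m13*m32))"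
    by (simp add: M0e X_def Xm_def k_def mat3_mult c0_def mat3_nth algebra_simps)
  hence e6: "m12*(m21*m11+m22*m21+m23*m31) = m21*(m11*m12+m12*m22+m13*m32)" using f3 k0 by simp
  have SU0: "M0 \<in> SU3" using SUM S by (simp add: M0_def S_def)
  hence un1: "M0 ** adj3 M0 = mat 1" by (simp add: SU3_def)
  hence un2: "adj3 M0 ** M0 = mat 1" using matrix_left_right_inverse by blast
  have u1: "m31 * cnj m31 + m32 * cnj m32 + m33 * cnj m33 = 1"
    using arg_cong[OF un1, of "\<lambda>A. A$3$3"] by (simp add: M0e mat3_mult mat3_adj mat3_one mat3_nth)
  have u2: "m13 * cnj m13 + m23 * cnj m23 + m33 * cnj m33 = 1"
    using arg_cong[OF un2, of "\<lambda>A. A$3$3"] by (simp add: M0e mat3_mult mat3_adj mat3_one mat3_nth mult.commute)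
  obtain eta where eta: "eta \<in> {0..<2*pi}" and "\<exists>a b c c' d. M0 =
      mat3 a (b * cis (-eta)) c (b * cis eta) a (c * cis eta) c' (c' * cis (-eta)) d"
    using final_alg[OF u1 u2 e1 e2 e3 e4 e5 e6] M0e by metis
  hence "M 0 \<in> G_eta eta" using SU0 by (simp add: G_eta_def M0_def)
  thus ?thesis using eta by blast
qed

end
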